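(* Let $s\ge1$, $M=(p^s-1)/2$, $1\le l\le g$ and $\delta_l=(2g+1)M-lp^s$. Then, as rational functions of $z$, $$(-1)^{\delta_l}\,(z_{n-2l}-z_n)^l\;\tilde I^{[lp^s-1]}_{p^s}(z)=x_1^{M}\,Q^{l,s}(x_2,\dots,x_{n-1}),$$ where $x_1,\dots,x_{n-1}$ are the rational functions of $z$ defined below. Moreover, the constant term of $Q^{l,s}$ equals $\binom{M}{l}\big(0,\dots,0,\tfrac{l}{M},1,\dots,1\big)$, with $0$ repeated $2g-2l$ times, $l/M$ in position $2g-2l+1$, and $1$ repeated $2l$ times.
   Context: Let $p$ be an odd prime, $g\ge1$, $n=2g+1$, with $p>n$; $z=(z_1,\dots,z_n)$. Put $M=(p^s-1)/2$, $\Phi_{p^s}(x,z)=\prod_{i=1}^n(x-z_i)^{M}$; substitute $x=v+z_n$ and expand $\Big(\frac{\Phi_{p^s}(v+z_n,z)}{v+z_n-z_1},\dots,\frac{\Phi_{p^s}(v+z_n,z)}{v+z_n-z_{n-1}},\frac{\Phi_{p^s}(v+z_n,z)}{v}\Big)=\sum_i\tilde P^i_{p^s}(z)v^i$ with $\tilde P^i_{p^s}(z)\in\mathbb Z[z]^n$; set $\tilde I^{[lp^s-1]}_{p^s}(z)=\tilde P^{lp^s-1}_{p^s}(z)$. Fix $1\le l\le g$. Define $x_1=\prod_{i=1}^{n-2l}(z_i-z_n)$; $x_i=\frac{z_{n-2l}-z_n}{z_{i-1}-z_n}$ for $2\le i\le n-2l$; $x_i=\frac{z_i-z_n}{z_{n-2l}-z_n}$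 for $n-2l+1\le i\le n-1$. Define the polynomial vector $Q^{l,s}=(Q^{l,s}_1,\dots,Q^{l,s}_n)$ in $x_2,\dots,x_{n-1}$ as follows. Write $X(a)=\prod_{i=2}^{n-2l}x_i^{a_{i-1}}\prod_{i=n-2l+1}^{n-1}x_i^{a_i}$ for $a=(a_1,\dots,a_{n-1})$; all sums below are over $a\in\mathbb Z^{n-1}$ with $0\le a_i\le M$. For $1\le j\le n-2l-1$: $Q^{l,s}_j=x_{j+1}\sum\binom{M-1}{a_j}\prod_{i\ne j}\binom{M}{a_i}X(a)$, summed over $a$ with $a_1+\dots+a_{n-2l}=a_{n-2l+1}+\dots+a_{n-1}+l-1$. For $j=n-2l$: $Q^{l,s}_j=\sum\binom{M-1}{a_j}\prod_{i\ne j}\binom{M}{a_i}X(a)$, same summation condition (with $l-1$). For $n-2l<j\le n-1$: $Q^{l,s}_j=\sum\binom{M-1}{a_j}\prod_{i\ne j}\binom{M}{a_i}X(a)$, summed over $a$ with $a_1+\dots+a_{n-2l}=a_{n-2l+1}+\dots+a_{n-1}+l$. $Q^{l,s}_n=\sum\prod_{i=1}^{n-1}\binom{M}{a_i}X(a)$, summed over $a$ with $a_1+\dots+a_{n-2l}=a_{n-2l+1}+\dots+a_{n-1}+l$. (Products $\prod_{i\ne j}$ are over $i\in\{1,\dots,n-1\}\setminus\{j\}$.) *)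

theory Defs
  imports "HOL-Computational_Algebra.Polynomial" "HOL-Library.FuncSet"
begin

(* Parameters: p, s, g, l.  n = 2g+1, M = (p^s-1)/2.
   Vectors z = (z_1..z_n) are functions nat => real indexed by 1..n. *)

definition nn :: "nat \<Rightarrow> nat" where "nn g = 2*g+1"

definition MM :: "nat \<Rightarrow> nat \<Rightarrow> nat" where "MM p s = (p^s - 1) div 2"

(* Phi_{p^s}(v + z_n, z) as a polynomial in v *)
definition Phi_shift :: "nat \<Rightarrow> nat \<Rightarrow> nat \<Rightarrow> (nat \<Rightarrow> real) \<Rightarrow> real poly" where
  "Phi_shift p s g z = (\<Prod>i\<in>{1..nn g}. [:z (nn g) - z i, 1:] ^ MM p s)"

(* j-th component of tilde I^{[l p^s - 1]}_{p^s}(z): coefficient of v^(l p^s - 1) in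
   Phi_{p^s}(v+z_n,z) / (v + z_n - z_j)  (for j = n the divisor is v) *)
definition Itilde :: "nat \<Rightarrow> nat \<Rightarrow> nat \<Rightarrow> nat \<Rightarrow> (nat \<Rightarrow> real) \<Rightarrow> nat \<Rightarrow> real" where
  "Itilde p s g l z j =
     coeff (Phi_shift p s g z div [:z (nn g) - z j, 1:]) (l * p^s - 1)"

definition x1 :: "nat \<Rightarrow> nat \<Rightarrow> (nat \<Rightarrow> real) \<Rightarrow> real" where
  "x1 g l z = (\<Prod>i\<in>{1..nn g - 2*l}. (z i - z (nn g)))"

definition xs :: "nat \<Rightarrow> nat \<Rightarrow> (nat \<Rightarrow> real) \<Rightarrow> nat \<Rightarrow> real" where
  "xs g l z i =
     (if 2 \<le> i \<and> i \<le> nn g - 2*l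
      then (z (nn g - 2*l) - z (nn g)) / (z (i - 1) - z (nn g))
      else (z i - z (nn g)) / (z (nn g - 2*l) - z (nn g)))"

definition Xmon :: "nat \<Rightarrow> nat \<Rightarrow> (nat \<Rightarrow> nat) \<Rightarrow> (nat \<Rightarrow> real) \<Rightarrow> real" where
  "Xmon g l a x = (\<Prod>i\<in>{2..nn g - 2*l}. x i ^ a (i - 1)) *
                  (\<Prod>i\<in>{nn g - 2*l + 1..nn g - 1}. x i ^ a i)"

definition Aset :: "nat \<Rightarrow> nat \<Rightarrow> nat \<Rightarrow> (nat \<Rightarrow> nat) set" where
  "Aset p s g = PiE {1..nn g - 1} (\<lambda>_. {0..MM p s})"

definition sumcond :: "nat \<Rightarrow> nat \<Rightarrow> nat \<Rightarrow> (nat \<Rightarrow> nat) \<Rightarrow> bool" where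
  "sumcond g l c a \<longleftrightarrow>
     (\<Sum>i\<in>{1..nn g - 2*l}. a i) = (\<Sum>i\<in>{nn g - 2*l + 1..nn g - 1}. a i) + c"

definition wt :: "nat \<Rightarrow> nat \<Rightarrow> nat \<Rightarrow> nat \<Rightarrow> (nat \<Rightarrow> nat) \<Rightarrow> real" where
  "wt p s g j a = real ((MM p s - 1) choose a j) *
                  (\<Prod>i\<in>{1..nn g - 1} - {j}. real (MM p s choose a i))"

definition wtn :: "nat \<Rightarrow> nat \<Rightarrow> nat \<Rightarrow> (nat \<Rightarrow> nat) \<Rightarrow> real" where
  "wtn p s g a = (\<Prod>i\<in>{1..nn g - 1}. real (MM p s choose a i))"

definition Q :: "nat \<Rightarrow> nat \<Rightarrow> nat \<Rightarrow> nat \<Rightarrow> nat \<Rightarrow> (nat \<Rightarrow> real) \<Rightarrow> real" where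
  "Q p s g l j x =
    (if j \<le> nn g - 2*l - 1 then
       x (j + 1) * (\<Sum>a\<in>{a\<in>Aset p s g. sumcond g l (l - 1) a}. wt p s g j a * Xmon g l a x)
     else if j = nn g - 2*l then
       (\<Sum>a\<in>{a\<in>Aset p s g. sumcond g l (l - 1) a}. wt p s g j a * Xmon g l a x)
     else if j \<le> nn g - 1 then
       (\<Sum>a\<in>{a\<in>Aset p s g. sumcond g l l a}. wt p s g j a * Xmon g l a x)
     else
       (\<Sum>a\<in>{a\<in>Aset p s g. sumcond g l l a}. wtn p s g a * Xmon g l a x))"

definition cvec :: "nat \<Rightarrow> nat \<Rightarrow> nat \<Rightarrow> nat \<Rightarrow> nat \<Rightarrow> real" where
  "cvec p s g l j =
     (if j \<le> 2*g - 2*l then 0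
      else if j = 2*g - 2*l + 1 then real l / real (MM p s)
      else 1)"

end

theory Submission
  imports Defs
begin


lemma lin_pow_expand:
  fixes c :: "'a::comm_ring_1"
  shows "[:c, 1:] ^ e = (\<Sum>b\<in>{0..e}. monom (of_nat (e choose b) * c ^ b) (e - b))"
proof -
  have "[:c, 1:] = [:c:] + monom 1 1" by (simp add: monom_Suc)
  hence "[:c, 1:] ^ e = (\<Sum>k\<le>e. of_nat (e choose k) * [:c:]^k * (monom 1 1)^(e-k))"
    by (simp add: binomial_ring)
  also have "\<dots> = (\<Sum>b\<in>{0..e}. monom (of_nat (e choose b) * c ^ b) (e - b))"
    by (simp only: atLeast0AtMost, intro sum.cong) (auto simp: monom_power of_nat_poly poly_const_pow smult_monom atLeast0AtMost)
  finally show ?thesis .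
qed
lemma prod_monom:
  fixes f :: "'i \<Rightarrow> 'a::comm_semiring_1"
  shows "finite I \<Longrightarrow> (\<Prod>i\<in>I. monom (f i) (d i)) = monom (\<Prod>i\<in>I. f i) (\<Sum>i\<in>I. d i)"
  by (induction I rule: finite_induct) (auto simp: mult_monom)

lemma coeff_prod_lin:
  fixes c :: "'i \<Rightarrow> 'a::comm_ring_1"
  assumes "finite I"
  shows "coeff (\<Prod>i\<in>I. [:c i, 1:] ^ e i) k =
    (\<Sum>b\<in>{b\<in>PiE I (\<lambda>i. {0..e i}). (\<Sum>i\<in>I. e i - b i) = k}.
        \<Prod>i\<in>I. of_nat (e i choose b i) * c i ^ b i)"
proof -
  have "(\<Prod>i\<in>I. [:c i, 1:] ^ e i) = (\<Prod>i\<in>I. \<Sum>b\<in>{0..e i}. monom (of_nat (e i choose b) * c i ^ b) (e i - b))"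
    by (simp add: lin_pow_expand)
  also have "\<dots> = (\<Sum>b\<in>PiE I (\<lambda>i. {0..e i}). \<Prod>i\<in>I. monom (of_nat (e i choose b i) * c i ^ b i) (e i - b i))"
    using assms by (simp add: prod_sum_PiE)
  also have "\<dots> = (\<Sum>b\<in>PiE I (\<lambda>i. {0..e i}). monom (\<Prod>i\<in>I. of_nat (e i choose b i) * c i ^ b i) (\<Sum>i\<in>I. e i - b i))"
    using assms by (simp add: prod_monom)
  finally show ?thesis
    using assms by (simp add: coeff_sum coeff_monom sum.inter_filter[symmetric] finite_PiE)
qed

lemma ar: fixes X E en P Y Z N M l :: nat
 shows "X \<le> E \<Longrightarrow> E + en + 1 = N \<Longrightarrow> en \<le> M \<Longrightarrow> P = 2*Y + l \<Longrightarrow>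
        l+1 \<le> Z \<Longrightarrow> N = Z + 2*Y \<Longrightarrow> M \<le> P - 1 \<Longrightarrow> 1 \<le> l \<Longrightarrow> (E - X = P - 1 - en) = (X = Z - l)"
  by linarith

locale L9 =
  fixes p s g l :: nat and z :: "nat \<Rightarrow> real"
  assumes pr: "prime p" and od: "odd p" and g1: "g \<ge> 1" and pg: "p > 2*g+1"
    and s1: "s \<ge> 1" and l1: "1 \<le> l" and lg: "l \<le> g"
    and zn: "\<forall>i\<in>{1..<2*g+1}. z i \<noteq> z (2*g+1)"
begin

definition "n = nn g"
definition "m = n - 2*l"
definition "M = MM p s"
definition "w i = z i - z n"
definition "B = Aset p s g"
definition "phi a = (\<lambda>i. if i \<in> {1..n-1} then (if i \<le> m then M - a i else a i) else undefined)"

lemma n_eq: "n = 2*g+1" by (simp add: n_def nn_def)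
lemma m_ge1: "m \<ge> 1" and m_n: "m + 2*l = n" and m_lt: "m < n - 1"
  using l1 lg by (auto simp: m_def n_eq)

lemma ps_eq: "p^s = 2*M+1"
proof -
  have "odd (p^s)" using od by simp
  then obtain k where "p^s = 2*k+1" by (meson oddE)
  then show ?thesis unfolding M_def MM_def by simp
qed

lemma M_ge: "M \<ge> l + 1"
proof -
  have "p \<le> p^s" using power_increasing[of 1 s p] s1 prime_gt_1_nat[OF pr] by simp
  moreover have "p \<ge> 2*g+3" proof -
    obtain k where "p = 2*k+1" using od by (meson oddE)
    thus ?thesis using pg by presburger
  qed
  ultimately show ?thesis using ps_eq lg by linarith
qed

lemma w_nz: "i \<in> {1..n-1} \<Longrightarrow> w i \<noteq> 0"
  using zn by (auto simp: w_def n_eq)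

lemma B_alt: "B = PiE {1..n-1} (\<lambda>_. {0..M})"
  by (simp add: B_def Aset_def n_def M_def)

lemma phi_B: "a \<in> B \<Longrightarrow> phi a \<in> B"
  by (auto simp: B_alt phi_def PiE_def Pi_def extensional_def)

lemma phi_phi: "a \<in> B \<Longrightarrow> phi (phi a) = a"
  by (rule ext) (auto simp: B_alt phi_def PiE_def Pi_def extensional_def)

definition "e j i = (if i = j then M - 1 else M)"
definition "dl = m*M - l"
definition "K = l*p^s - 1"

lemma M1: "M \<ge> 1" using M_ge by simp

lemma Phi_eq: "Phi_shift p s g z = (\<Prod>i\<in>{1..n}. [:-w i, 1:]^M)"
  by (simp add: Phi_shift_def n_def M_def w_def)

lemma Fj:
  assumes j: "j \<in> {1..n}"
  shows "Phi_shift p s g z div [:z n - z j, 1:] = (\<Prod>i\<in>{1..n}. [:-w i,1:]^(e j i))"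
proof -
  let ?F = "\<Prod>i\<in>{1..n}. [:-w i,1:]^(e j i)"
  have F: "?F = [:-w j,1:]^(M-1) * (\<Prod>i\<in>{1..n}-{j}. [:-w i,1:]^M)"
    using j by (simp add: prod.remove e_def)
  have "Phi_shift p s g z = [:-w j,1:]^M * (\<Prod>i\<in>{1..n}-{j}. [:-w i,1:]^M)"
    using j by (simp add: Phi_eq prod.remove)
  also have "[:-w j,1:]^M = [:-w j,1:] * [:-w j,1:]^(M-1)"
    using M1 by (cases M) auto
  finally have "Phi_shift p s g z = [:-w j,1:] * ?F" unfolding F by (simp only: mult.assoc)
  moreover have "[:z n - z j, 1:] = [:-w j,1:]" by (simp add: w_def)
  ultimately show ?thesis by (simp only:) (rule nonzero_mult_div_cancel_left, simp)
qed

lemma K_ge: "K \<ge> M" and lps: "l*p^s = 2*(l*M) + l" and mM: "m*M \<ge> l+1" and nM: "n*M = m*M + 2*(l*M)"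
proof -
  show "l*p^s = 2*(l*M) + l" using ps_eq by (simp add: algebra_simps)
  moreover have "l*M \<ge> M" using l1 mult_le_mono1[of 1 l M] by simp
  ultimately show "K \<ge> M" unfolding K_def by linarith
  have "m*M \<ge> M" using m_ge1 mult_le_mono1[of 1 m M] by simp
  thus "m*M \<ge> l+1" using M_ge by linarith
  show "n*M = m*M + 2*(l*M)" by (simp add: m_n[symmetric] algebra_simps)
qed

lemma sum_e: assumes "j \<in> {1..n}" shows "(\<Sum>i\<in>{1..n}. e j i) + 1 = n*M"
proof -
  have "(\<Sum>i\<in>{1..n}. e j i) = e j j + (\<Sum>i\<in>{1..n}-{j}. e j i)"
    using assms by (simp add: sum.remove)
  also have "(\<Sum>i\<in>{1..n}-{j}. e j i) = (n-1)*M"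
    using assms by (simp add: e_def)
  moreover have "n*M = (n-1)*M + M" using n_eq by (cases n) auto
  ultimately show ?thesis using M1 by (simp add: e_def)
qed

lemma Itilde_form:
  assumes j: "j \<in> {1..n}"
  shows "Itilde p s g l z j = (-1)^dl *
    (\<Sum>b\<in>{b\<in>PiE {1..n-1} (\<lambda>i. {0..e j i}). sum b {1..n-1} = dl}.
        \<Prod>i\<in>{1..n-1}. real (e j i choose b i) * w i ^ b i)"
proof -
  have n1: "{1..n} = insert n {1..n-1}" using n_eq by auto
  have wn: "w n = 0" by (simp add: w_def)
  have x: "[:0::real,1:]^k = monom 1 k" for k
  proof -
    have "[:0::real,1:] = monom 1 1" by (simp add: monom_Suc)
    thus ?thesis using monom_power[of "1::real" 1 k] by simp
  qed
  have F: "(\<Prod>i\<in>{1..n}. [:-w i,1:]^(e j i)) = monom 1 (e j n) * (\<Prod>i\<in>{1..n-1}. [:-w i,1:]^(e j i))"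
    unfolding n1 by (subst prod.insert) (auto simp: wn x)
  have Kn: "K \<ge> e j n" using K_ge by (auto simp: e_def)
  have "Itilde p s g l z j = coeff (Phi_shift p s g z div [:z n - z j, 1:]) K"
    by (simp add: Itilde_def K_def n_def)
  also have "\<dots> = coeff (monom 1 (e j n) * (\<Prod>i\<in>{1..n-1}. [:-w i,1:]^(e j i))) K"
    by (simp only: Fj[OF j] F)
  also have "\<dots> = coeff (\<Prod>i\<in>{1..n-1}. [:-w i,1:]^(e j i)) (K - e j n)"
    using Kn by (simp add: coeff_monom_mult)
  also have "\<dots> = (\<Sum>b\<in>{b\<in>PiE {1..n-1} (\<lambda>i. {0..e j i}). (\<Sum>i\<in>{1..n-1}. e j i - b i) = K - e j n}.
        \<Prod>i\<in>{1..n-1}. real (e j i choose b i) * (- w i) ^ b i)"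
    by (rule coeff_prod_lin) simp
  also have "\<dots> = (\<Sum>b\<in>{b\<in>PiE {1..n-1} (\<lambda>i. {0..e j i}). sum b {1..n-1} = dl}.
        \<Prod>i\<in>{1..n-1}. real (e j i choose b i) * (- w i) ^ b i)"
  proof (rule sum.cong[OF _ refl])
    have key: "((\<Sum>i\<in>{1..n-1}. e j i - b i) = K - e j n) = (sum b {1..n-1} = dl)"
      if b: "b \<in> PiE {1..n-1} (\<lambda>i. {0..e j i})" for b
    proof -
    have le: "\<forall>i\<in>{1..n-1}. b i \<le> e j i" using b by auto
    have s1: "(\<Sum>i\<in>{1..n-1}. e j i - b i) = (\<Sum>i\<in>{1..n-1}. e j i) - sum b {1..n-1}"
      using le by (intro sum_subtractf_nat) auto
    have s2: "sum b {1..n-1} \<le> (\<Sum>i\<in>{1..n-1}. e j i)" using le by (intro sum_mono) auto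
    have s3: "(\<Sum>i\<in>{1..n-1}. e j i) + e j n + 1 = n*M" using sum_e[OF j] n_eq by (simp add: n1)
    have en: "e j n \<le> M" by (simp add: e_def)
    show "((\<Sum>i\<in>{1..n-1}. e j i - b i) = K - e j n) = (sum b {1..n-1} = dl)"
      unfolding s1 K_def dl_def by (rule ar[OF s2 s3 en lps mM nM K_ge[unfolded K_def] l1])
    qed
    show "{b\<in>PiE {1..n-1} (\<lambda>i. {0..e j i}). (\<Sum>i\<in>{1..n-1}. e j i - b i) = K - e j n}
      = {b\<in>PiE {1..n-1} (\<lambda>i. {0..e j i}). sum b {1..n-1} = dl}" by (rule Collect_cong) (use key in blast)
  qed
  also have "\<dots> = (\<Sum>b\<in>{b\<in>PiE {1..n-1} (\<lambda>i. {0..e j i}). sum b {1..n-1} = dl}.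
        (-1)^dl * (\<Prod>i\<in>{1..n-1}. real (e j i choose b i) * w i ^ b i))"
  proof (rule sum.cong[OF refl])
    fix b assume "b \<in> {b\<in>PiE {1..n-1} (\<lambda>i. {0..e j i}). sum b {1..n-1} = dl}"
    hence bs: "sum b {1..n-1} = dl" by simp
    have "(\<Prod>i\<in>{1..n-1}. real (e j i choose b i) * (- w i) ^ b i)
        = (\<Prod>i\<in>{1..n-1}. (-1) ^ b i * (real (e j i choose b i) * w i ^ b i))"
      by (intro prod.cong refl) (simp only: power_minus[of "w _"] mult_ac)
    also have "\<dots> = (-1)^(sum b {1..n-1}) * (\<Prod>i\<in>{1..n-1}. real (e j i choose b i) * w i ^ b i)"
      by (simp only: prod.distrib power_sum)
    finally show "(\<Prod>i\<in>{1..n-1}. real (e j i choose b i) * (- w i) ^ b i) = (-1)^dl * (\<Prod>i\<in>{1..n-1}. real (e j i choose b i) * w i ^ b i)"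
      using bs by simp
  qed
  finally show ?thesis by (simp only: sum_distrib_left)
qed

end



lemma prod_split_last: fixes m :: nat shows "1 \<le> m \<Longrightarrow> (\<Prod>i\<in>{1..m}. f i) = (\<Prod>i\<in>{1..m-1}. f i) * (f m :: 'a::comm_monoid_mult)"
proof -
  assume "1 \<le> m"
  hence "{1..m} = insert m {1..m-1}" by auto
  thus ?thesis using \<open>1 \<le> m\<close> by (simp add: mult.commute)
qed

lemma sum_split_last: fixes m :: nat shows "1 \<le> m \<Longrightarrow> (\<Sum>i\<in>{1..m}. f i) = (\<Sum>i\<in>{1..m-1}. f i) + (f m :: 'a::comm_monoid_add)"
proof -
  assume "1 \<le> m"
  hence "{1..m} = insert m {1..m-1}" by auto
  thus ?thesis using \<open>1 \<le> m\<close> by (simp add: add.commute)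
qed

lemma prod_split_mid: fixes m k :: nat shows "m \<le> k \<Longrightarrow> (\<Prod>i\<in>{1..k}. f i) = (\<Prod>i\<in>{1..m}. f i) * (\<Prod>i\<in>{m+1..k}. (f i :: 'a::comm_monoid_mult))"
proof -
  assume "m \<le> k"
  hence "{1..k} = {1..m} \<union> {m+1..k}" by auto
  thus ?thesis by (simp add: prod.union_disjoint[symmetric] ivl_disj_int)
qed

lemma sum_split_mid: fixes m k :: nat shows "m \<le> k \<Longrightarrow> (\<Sum>i\<in>{1..k}. f i) = (\<Sum>i\<in>{1..m}. f i) + (\<Sum>i\<in>{m+1..k}. (f i :: 'a::comm_monoid_add))"
proof -
  assume "m \<le> k"
  hence "{1..k} = {1..m} \<union> {m+1..k}" by auto
  thus ?thesis by (simp add: sum.union_disjoint[symmetric] ivl_disj_int)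
qed

lemma prod_shift1: fixes m :: nat shows "1 \<le> m \<Longrightarrow> (\<Prod>i\<in>{2..m}. f (i - 1)) = (\<Prod>i\<in>{1..m-1}. (f i :: 'a::comm_monoid_mult))"
proof -
  assume "1 \<le> m"
  hence eq: "{2..m} = Suc ` {1..m-1}" by (auto simp: image_iff intro!: bexI[where x="_ - 1"])
  show ?thesis unfolding eq by (subst prod.reindex) auto
qed

context L9 begin

lemma x1_eq: "x1 g l z = (\<Prod>i\<in>{1..m}. w i)"
  by (simp add: x1_def m_def n_def w_def)

lemma xs_lo: "2 \<le> i \<Longrightarrow> i \<le> m \<Longrightarrow> xs g l z i = w m / w (i - 1)"
  by (simp add: xs_def m_def n_def w_def)

lemma xs_hi: "m < i \<Longrightarrow> xs g l z i = w i / w m"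
  by (simp add: xs_def m_def n_def w_def)

lemma Xmon_eq: "Xmon g l a (xs g l z) = (\<Prod>i\<in>{1..m-1}. (w m / w i) ^ a i) * (\<Prod>i\<in>{m+1..n-1}. (w i / w m) ^ a i)"
proof -
  have "(\<Prod>i\<in>{2..m}. xs g l z i ^ a (i - 1)) = (\<Prod>i\<in>{2..m}. (\<lambda>k. (w m / w k) ^ a k) (i - 1))"
    by (intro prod.cong refl) (simp add: xs_lo)
  also have "\<dots> = (\<Prod>i\<in>{1..m-1}. (w m / w i) ^ a i)" by (rule prod_shift1[OF m_ge1])
  finally show ?thesis unfolding Xmon_def using xs_hi
    by (simp add: m_def[symmetric] n_def[symmetric])
qed

lemma sumcond_eq: "sumcond g l c a \<longleftrightarrow> (\<Sum>i\<in>{1..m}. a i) = (\<Sum>i\<in>{m+1..n-1}. a i) + c"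
  by (simp add: sumcond_def m_def n_def)

lemma KT:
  assumes a: "a \<in> B" and sc: "(\<Sum>i\<in>{1..m}. a i) = (\<Sum>i\<in>{m+1..n-1}. a i) + c"
  shows "x1 g l z ^ M * Xmon g l a (xs g l z) = w m ^ c * (\<Prod>i\<in>{1..n-1}. w i ^ phi a i)"
proof -
  have aM: "i \<in> {1..n-1} \<Longrightarrow> a i \<le> M" for i using a by (auto simp: B_alt PiE_def Pi_def)
  have mn: "m \<le> n - 1" using m_lt by simp
  have wm: "w m \<noteq> 0" using w_nz m_ge1 m_lt by simp
  have wi: "i \<in> {1..m-1} \<Longrightarrow> w i \<noteq> 0" for i by (intro w_nz) (use m_lt in auto)
  define W where "W = w m"
  define A where "A = (\<Prod>i\<in>{1..m-1}. w i ^ M)"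
  define Bp where "Bp = (\<Prod>i\<in>{1..m-1}. w i ^ a i)"
  define C where "C = (\<Prod>i\<in>{m+1..n-1}. w i ^ a i)"
  define S1 where "S1 = (\<Sum>i\<in>{1..m-1}. a i)"
  define S2 where "S2 = (\<Sum>i\<in>{m+1..n-1}. a i)"
  have Bp0: "Bp \<noteq> 0" unfolding Bp_def using wi by (simp add: prod_zero_iff)
  have W0: "W \<noteq> 0" using wm W_def by simp
  have ex: "S1 + a m = S2 + c" using sc sum_split_last[OF m_ge1, of a] by (simp add: S1_def S2_def)
  have amM: "a m \<le> M" using aM m_ge1 m_lt by simp
  have L1: "x1 g l z ^ M = A * W ^ M"
    unfolding x1_eq prod_split_last[OF m_ge1] by (simp add: A_def W_def power_mult_distrib prod_power_distrib)
  have L2: "(\<Prod>i\<in>{1..m-1}. (w m / w i) ^ a i) = W ^ S1 / Bp"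
    by (simp add: power_divide prod_dividef Bp_def W_def S1_def power_sum)
  have L3: "(\<Prod>i\<in>{m+1..n-1}. (w i / w m) ^ a i) = C / W ^ S2"
    by (simp add: power_divide prod_dividef C_def W_def S2_def power_sum)
  have R1: "(\<Prod>i\<in>{1..n-1}. w i ^ phi a i) = (\<Prod>i\<in>{1..m-1}. w i ^ (M - a i)) * W ^ (M - a m) * C"
    unfolding prod_split_mid[OF mn] prod_split_last[OF m_ge1] C_def W_def
    using mn m_ge1 by (intro arg_cong2[where f="(*)"] prod.cong refl) (auto simp: phi_def)
  have R2: "(\<Prod>i\<in>{1..m-1}. w i ^ (M - a i)) = A / Bp"
  proof -
    have "(\<Prod>i\<in>{1..m-1}. w i ^ (M - a i)) = (\<Prod>i\<in>{1..m-1}. w i ^ M / w i ^ a i)"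
    proof (intro prod.cong refl)
      fix x assume x: "x \<in> {1..m-1}"
      have "a x \<le> M" using aM x m_lt by auto
      thus "w x ^ (M - a x) = w x ^ M / w x ^ a x" using power_diff[OF wi[OF x] \<open>a x \<le> M\<close>] by simp
    qed
    thus ?thesis by (simp add: prod_dividef A_def Bp_def)
  qed
  have EW: "W ^ M * W ^ S1 = W ^ c * W ^ (M - a m) * W ^ S2"
  proof -
    have "M + S1 = c + (M - a m) + S2" using ex amM by linarith
    thus ?thesis by (simp only: power_add[symmetric])
  qed
  have LL: "x1 g l z ^ M * Xmon g l a (xs g l z) = A * W ^ M * (W ^ S1 / Bp * (C / W ^ S2))"
    unfolding Xmon_eq L1 L2 L3 by simp
  have RR: "w m ^ c * (\<Prod>i\<in>{1..n-1}. w i ^ phi a i) = W ^ c * (A / Bp * W ^ (M - a m) * C)"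
    unfolding R1 R2 W_def by simp
  have "A * W ^ M * (W ^ S1 / Bp * (C / W ^ S2)) = W ^ c * (A / Bp * W ^ (M - a m) * C)"
  proof -
    have "A * W ^ M * (W ^ S1 / Bp * (C / W ^ S2)) = A * C * (W ^ M * W ^ S1) / (Bp * W ^ S2)"
      by (simp add: field_simps)
    also have "\<dots> = A * C * (W ^ c * W ^ (M - a m)) / Bp" unfolding EW using W0 by (simp add: field_simps)
    finally show ?thesis by (simp add: field_simps)
  qed
  thus ?thesis using LL RR by simp
qed

end


context L9 begin

lemma sc_phi:
  assumes a: "a \<in> B" and c: "c \<le> m*M"
  shows "((\<Sum>i\<in>{1..m}. a i) = (\<Sum>i\<in>{m+1..n-1}. a i) + c) \<longleftrightarrow> sum (phi a) {1..n-1} = m*M - c"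
proof -
  have aM: "i \<in> {1..n-1} \<Longrightarrow> a i \<le> M" for i using a by (auto simp: B_alt PiE_def Pi_def)
  have mn: "m \<le> n - 1" using m_lt by simp
  have "sum (phi a) {1..n-1} = (\<Sum>i\<in>{1..m}. M - a i) + (\<Sum>i\<in>{m+1..n-1}. a i)"
    unfolding sum_split_mid[OF mn] using mn by (intro arg_cong2[where f="(+)"] sum.cong refl) (auto simp: phi_def)
  moreover have "(\<Sum>i\<in>{1..m}. M - a i) = m*M - (\<Sum>i\<in>{1..m}. a i)"
    using aM mn by (subst sum_subtractf_nat) auto
  moreover have "(\<Sum>i\<in>{1..m}. a i) \<le> m*M"
  proof -
    have "(\<Sum>i\<in>{1..m}. a i) \<le> (\<Sum>i\<in>{1..m}. M)" using aM mn by (intro sum_mono) auto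
    thus ?thesis by simp
  qed
  ultimately show ?thesis using c by linarith
qed

lemma RI:
  assumes c: "c \<le> m*M"
  shows "(\<Sum>a\<in>{a\<in>B. sumcond g l c a}. f a) = (\<Sum>b\<in>{b\<in>B. sum b {1..n-1} = m*M - c}. f (phi b))"
proof (rule sum.reindex_bij_witness[where i=phi and j=phi])
  fix a assume a: "a \<in> {a\<in>B. sumcond g l c a}"
  show "phi (phi a) = a" using a phi_phi by auto
  show "f (phi (phi a)) = f a" using a phi_phi by auto
  have "a \<in> B" "sumcond g l c a" using a by auto
  thus "phi a \<in> {b\<in>B. sum b {1..n-1} = m*M - c}" using phi_B sc_phi[OF _ c] by (simp add: sumcond_eq)
next
  fix b assume b: "b \<in> {b\<in>B. sum b {1..n-1} = m*M - c}"
  show "phi (phi b) = b" using b phi_phi by auto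
  have bb: "b \<in> B" "sum b {1..n-1} = m*M - c" using b by auto
  hence "sum (phi (phi b)) {1..n-1} = m*M - c" using phi_phi by simp
  hence "sumcond g l c (phi b)" using sc_phi[OF phi_B[OF bb(1)] c] by (simp add: sumcond_eq)
  thus "phi b \<in> {a\<in>B. sumcond g l c a}" using phi_B bb by simp
qed

lemma finB: "finite B" by (simp add: B_alt finite_PiE)

lemma LHS:
  assumes j: "j \<in> {1..n}"
  shows "(-1::real) powi (int (n * M) - int (l * p^s)) * w m ^ l * Itilde p s g l z j
     = w m ^ l * (\<Sum>b\<in>{b\<in>B. sum b {1..n-1} = dl}. \<Prod>i\<in>{1..n-1}. real (e j i choose b i) * w i ^ b i)"
proof -
  have "int (n * M) - int (l * p^s) = int dl"
    using nM lps mM unfolding dl_def by simp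
  hence sg0: "(-1::real) powi (int (n * M) - int (l * p^s)) = (-1)^dl" by simp
  have "(-1::real)^dl * (-1)^dl = ((-1) * (-1))^dl" by (simp only: power_mult_distrib)
  hence sg: "(-1::real) powi (int (n * M) - int (l * p^s)) * (-1)^dl = 1" unfolding sg0 by simp
  have ext: "(\<Sum>b\<in>{b\<in>PiE {1..n-1} (\<lambda>i. {0..e j i}). sum b {1..n-1} = dl}. \<Prod>i\<in>{1..n-1}. real (e j i choose b i) * w i ^ b i)
     = (\<Sum>b\<in>{b\<in>B. sum b {1..n-1} = dl}. \<Prod>i\<in>{1..n-1}. real (e j i choose b i) * w i ^ b i)"
  proof (rule sum.mono_neutral_left)
    show "finite {b\<in>B. sum b {1..n-1} = dl}" using finB by simp
    show "{b\<in>PiE {1..n-1} (\<lambda>i. {0..e j i}). sum b {1..n-1} = dl} \<subseteq> {b\<in>B. sum b {1..n-1} = dl}"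
    proof (rule subsetI)
      fix b assume "b \<in> {b\<in>PiE {1..n-1} (\<lambda>i. {0..e j i}). sum b {1..n-1} = dl}"
      hence b1: "b \<in> PiE {1..n-1} (\<lambda>i. {0..e j i})" and b2: "sum b {1..n-1} = dl" by auto
      have "PiE {1..n-1} (\<lambda>i. {0..e j i}) \<subseteq> PiE {1..n-1} (\<lambda>_. {0..M})"
        by (rule PiE_mono) (auto simp: e_def)
      thus "b \<in> {b\<in>B. sum b {1..n-1} = dl}" using b1 b2 unfolding B_alt by blast
    qed
    show "\<forall>b\<in>{b\<in>B. sum b {1..n-1} = dl} - {b\<in>PiE {1..n-1} (\<lambda>i. {0..e j i}). sum b {1..n-1} = dl}.
        (\<Prod>i\<in>{1..n-1}. real (e j i choose b i) * w i ^ b i) = 0"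
    proof
      fix b assume b: "b \<in> {b\<in>B. sum b {1..n-1} = dl} - {b\<in>PiE {1..n-1} (\<lambda>i. {0..e j i}). sum b {1..n-1} = dl}"
      hence "b \<in> B" "b \<notin> PiE {1..n-1} (\<lambda>i. {0..e j i})" by auto
      then obtain i where i: "i \<in> {1..n-1}" "b i > e j i"
        by (auto simp: B_alt PiE_def Pi_def)
      hence "real (e j i choose b i) * w i ^ b i = 0" by simp
      thus "(\<Prod>i\<in>{1..n-1}. real (e j i choose b i) * w i ^ b i) = 0"
        using i by (intro prod_zero) auto
    qed
  qed
  define S where "S = (\<Sum>b\<in>{b\<in>PiE {1..n-1} (\<lambda>i. {0..e j i}). sum b {1..n-1} = dl}. \<Prod>i\<in>{1..n-1}. real (e j i choose b i) * w i ^ b i)"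
  have "(-1::real) powi (int (n * M) - int (l * p^s)) * w m ^ l * Itilde p s g l z j
     = ((-1::real) powi (int (n * M) - int (l * p^s)) * (-1)^dl) * (w m ^ l * S)"
    unfolding Itilde_form[OF j] S_def by (simp only: mult_ac)
  thus ?thesis unfolding sg ext[symmetric] S_def by simp
qed

end



lemma sum_upd: "finite A \<Longrightarrow> j \<in> A \<Longrightarrow> sum (f(j:=x)) A = x + sum f (A - {j})"
  by (simp add: sum.remove)
lemma prod_upd: "finite A \<Longrightarrow> j \<in> A \<Longrightarrow> prod (f(j:=x)) A = x * prod f (A - {j})"
  by (simp add: prod.remove)

context L9 begin

lemma Q_lo: "1 \<le> j \<Longrightarrow> j < m \<Longrightarrow> Q p s g l j x = x (j+1) * (\<Sum>a\<in>{a\<in>B. sumcond g l (l-1) a}. wt p s g j a * Xmon g l a x)"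
  using m_ge1 by (simp add: Q_def B_def m_def n_def)
lemma Q_m: "Q p s g l m x = (\<Sum>a\<in>{a\<in>B. sumcond g l (l-1) a}. wt p s g m a * Xmon g l a x)"
  using m_ge1 by (simp add: Q_def B_def m_def n_def)
lemma Q_hi: "m < j \<Longrightarrow> j \<le> n - 1 \<Longrightarrow> Q p s g l j x = (\<Sum>a\<in>{a\<in>B. sumcond g l l a}. wt p s g j a * Xmon g l a x)"
  using m_ge1 by (simp add: Q_def B_def m_def n_def)
lemma Q_n: "Q p s g l n x = (\<Sum>a\<in>{a\<in>B. sumcond g l l a}. wtn p s g a * Xmon g l a x)"
  using m_ge1 m_lt by (simp add: Q_def B_def m_def n_def)

lemma bin_phi: "b \<in> B \<Longrightarrow> i \<in> {1..n-1} \<Longrightarrow> M choose phi b i = M choose b i"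
  by (auto simp: phi_def B_alt PiE_def Pi_def intro: binomial_symmetric[symmetric])

lemma R_phi: "b \<in> B \<Longrightarrow> (\<Prod>i\<in>{1..n-1}-{j}. real (M choose phi b i)) = (\<Prod>i\<in>{1..n-1}-{j}. real (M choose b i))"
  by (intro prod.cong refl) (simp add: bin_phi)

lemma wt_eq: "wt p s g j a = real ((M-1) choose a j) * (\<Prod>i\<in>{1..n-1}-{j}. real (M choose a i))"
  by (simp add: wt_def M_def n_def)

lemma e_prod: "j \<in> {1..n-1} \<Longrightarrow> (\<Prod>i\<in>{1..n-1}. real (e j i choose b i)) = real ((M-1) choose b j) * (\<Prod>i\<in>{1..n-1}-{j}. real (M choose b i))"
  by (simp add: prod.remove e_def)

lemma wt_phi_hi: "b \<in> B \<Longrightarrow> m < j \<Longrightarrow> j \<le> n - 1 \<Longrightarrow> wt p s g j (phi b) = (\<Prod>i\<in>{1..n-1}. real (e j i choose b i))"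
proof -
  assume b: "b \<in> B" and j: "m < j" "j \<le> n - 1"
  have j1: "j \<in> {1..n-1}" using j m_ge1 by auto
  have "phi b j = b j" using j1 j by (simp add: phi_def)
  thus ?thesis unfolding wt_eq R_phi[OF b] e_prod[OF j1] by simp
qed

lemma wtn_phi: "b \<in> B \<Longrightarrow> wtn p s g (phi b) = (\<Prod>i\<in>{1..n-1}. real (e n i choose b i))"
proof -
  assume b: "b \<in> B"
  have "wtn p s g (phi b) = (\<Prod>i\<in>{1..n-1}. real (M choose phi b i))" by (simp add: wtn_def M_def n_def)
  also have "\<dots> = (\<Prod>i\<in>{1..n-1}. real (e n i choose b i))"
    using b by (intro prod.cong refl) (auto simp: bin_phi e_def)
  finally show ?thesis .
qed

definition "T b = (\<Prod>i\<in>{1..n-1}. w i ^ b i)"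

lemma LHS_T: "(\<Prod>i\<in>{1..n-1}. real (e j i choose b i) * w i ^ b i) = (\<Prod>i\<in>{1..n-1}. real (e j i choose b i)) * T b"
  by (simp add: prod.distrib T_def)

lemma case_hi:
  assumes j: "m < j" "j \<le> n"
  shows "x1 g l z ^ M * Q p s g l j (xs g l z)
     = w m ^ l * (\<Sum>b\<in>{b\<in>B. sum b {1..n-1} = dl}. \<Prod>i\<in>{1..n-1}. real (e j i choose b i) * w i ^ b i)"
proof -
  define wj where "wj a = (if j \<le> n - 1 then wt p s g j a else wtn p s g a)" for a
  have Q: "Q p s g l j (xs g l z) = (\<Sum>a\<in>{a\<in>B. sumcond g l l a}. wj a * Xmon g l a (xs g l z))"
  proof (cases "j \<le> n - 1")
    case True thus ?thesis using Q_hi j by (simp add: wj_def)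
  next
    case False hence "j = n" using j by simp
    thus ?thesis using Q_n n_eq by (simp add: wj_def)
  qed
  have lm: "l \<le> m*M" using mM by simp
  have "x1 g l z ^ M * Q p s g l j (xs g l z) = (\<Sum>a\<in>{a\<in>B. sumcond g l l a}. wj a * (w m ^ l * T (phi a)))"
    unfolding Q sum_distrib_left
  proof (intro sum.cong refl)
    fix a assume "a \<in> {a\<in>B. sumcond g l l a}"
    hence "a \<in> B" "(\<Sum>i\<in>{1..m}. a i) = (\<Sum>i\<in>{m+1..n-1}. a i) + l" by (auto simp: sumcond_eq)
    from KT[OF this] show "x1 g l z ^ M * (wj a * Xmon g l a (xs g l z)) = wj a * (w m ^ l * T (phi a))"
      by (simp add: T_def mult_ac)
  qed
  also have "\<dots> = (\<Sum>b\<in>{b\<in>B. sum b {1..n-1} = m*M - l}. wj (phi b) * (w m ^ l * T (phi (phi b))))"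
    by (rule RI[OF lm])
  also have "\<dots> = (\<Sum>b\<in>{b\<in>B. sum b {1..n-1} = dl}. w m ^ l * ((\<Prod>i\<in>{1..n-1}. real (e j i choose b i)) * T b))"
  proof (intro sum.cong)
    show "{b\<in>B. sum b {1..n-1} = m*M - l} = {b\<in>B. sum b {1..n-1} = dl}" by (simp add: dl_def)
  next
    fix b assume "b \<in> {b\<in>B. sum b {1..n-1} = dl}"
    hence b: "b \<in> B" by simp
    have "wj (phi b) = (\<Prod>i\<in>{1..n-1}. real (e j i choose b i))"
    proof (cases "j \<le> n - 1")
      case True thus ?thesis using wt_phi_hi[OF b j(1)] by (simp add: wj_def)
    next
      case False hence "j = n" using j by simp
      thus ?thesis using wtn_phi[OF b] n_eq by (simp add: wj_def)
    qed
    thus "wj (phi b) * (w m ^ l * T (phi (phi b))) = w m ^ l * ((\<Prod>i\<in>{1..n-1}. real (e j i choose b i)) * T b)"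
      using phi_phi[OF b] by simp
  qed
  finally show ?thesis unfolding LHS_T sum_distrib_left .
qed

end


context L9 begin

definition "R j b = (\<Prod>i\<in>{1..n-1}-{j}. real (M choose b i))"

lemma shift:
  assumes j: "j \<in> {1..n-1}"
  shows "(\<Sum>b\<in>{b\<in>B. sum b {1..n-1} = dl + 1}. real ((M-1) choose (M - b j)) * R j b * (T b / w j))
       = (\<Sum>b\<in>{b\<in>B. sum b {1..n-1} = dl}. real ((M-1) choose b j) * R j b * T b)"
    (is "?L = ?R")
proof -
  define up where "up b = b(j := Suc (b j))" for b :: "nat \<Rightarrow> nat"
  define dn where "dn b = b(j := b j - 1)" for b :: "nat \<Rightarrow> nat"
  define S1 where "S1 = {b\<in>B. sum b {1..n-1} = dl + 1 \<and> 1 \<le> b j}"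
  define S2 where "S2 = {b\<in>B. sum b {1..n-1} = dl \<and> b j < M}"
  have fin: "finite {1..n-1}" by simp
  have bj: "b \<in> B \<Longrightarrow> b j \<le> M" for b using j by (auto simp: B_alt PiE_def Pi_def)
  have wj: "w j \<noteq> 0" using w_nz j by simp
  have L: "?L = (\<Sum>b\<in>S1. real ((M-1) choose (M - b j)) * R j b * (T b / w j))"
    unfolding S1_def using M1 by (intro sum.mono_neutral_right) (auto simp: finB)
  have R: "?R = (\<Sum>b\<in>S2. real ((M-1) choose b j) * R j b * T b)"
  proof (unfold S2_def, rule sum.mono_neutral_right)
    show "\<forall>b\<in>{b\<in>B. sum b {1..n-1} = dl} - {b\<in>B. sum b {1..n-1} = dl \<and> b j < M}. real ((M-1) choose b j) * R j b * T b = 0"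
    proof
      fix b assume "b \<in> {b\<in>B. sum b {1..n-1} = dl} - {b\<in>B. sum b {1..n-1} = dl \<and> b j < M}"
      hence "b j = M" using bj by force
      thus "real ((M-1) choose b j) * R j b * T b = 0" using M1 by simp
    qed
  qed (auto simp: finB)
  have upB: "b \<in> B \<Longrightarrow> b j < M \<Longrightarrow> up b \<in> B" for b
    using j by (auto simp: up_def B_alt PiE_def Pi_def extensional_def)
  have dnB: "b \<in> B \<Longrightarrow> dn b \<in> B" for b
    using j by (auto simp: dn_def B_alt PiE_def Pi_def extensional_def)
  have sum_up: "sum (up b) {1..n-1} = sum b {1..n-1} + 1" for b
    using j unfolding up_def sum_upd[OF fin j] sum.remove[OF fin j, of b] by simp
  have sum_dn: "1 \<le> b j \<Longrightarrow> sum (dn b) {1..n-1} + 1 = sum b {1..n-1}" for b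
    using j unfolding dn_def sum_upd[OF fin j] sum.remove[OF fin j, of b] by simp
  have Rup: "R j (up b) = R j b" for b unfolding R_def up_def by (intro prod.cong refl) auto
  have Tup: "T (up b) = w j * T b" for b
  proof -
    have A: "(\<Prod>i\<in>{1..n-1}-{j}. w i ^ (b(j := Suc (b j))) i) = (\<Prod>i\<in>{1..n-1}-{j}. w i ^ b i)"
      by (intro prod.cong refl) auto
    have "T (up b) = w j ^ Suc (b j) * (\<Prod>i\<in>{1..n-1}-{j}. w i ^ b i)"
      unfolding T_def up_def prod.remove[OF fin j, of "\<lambda>i. w i ^ (b(j := Suc (b j))) i"] A by simp
    moreover have "T b = w j ^ b j * (\<Prod>i\<in>{1..n-1}-{j}. w i ^ b i)"
      unfolding T_def by (rule prod.remove[OF fin j])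
    ultimately show ?thesis by simp
  qed
  have trm: "b \<in> S2 \<Longrightarrow> real ((M-1) choose (M - up b j)) * R j (up b) * (T (up b) / w j) = real ((M-1) choose b j) * R j b * T b" for b
  proof -
    assume "b \<in> S2"
    hence bM: "b j < M" by (simp add: S2_def)
    have "(M-1) choose (M - up b j) = (M-1) choose (M - 1 - b j)" by (simp add: up_def)
    also have "\<dots> = (M-1) choose b j" using bM by (intro binomial_symmetric[symmetric]) simp
    finally show ?thesis unfolding Rup Tup using wj by simp
  qed
  have "(\<Sum>b\<in>S1. real ((M-1) choose (M - b j)) * R j b * (T b / w j)) = (\<Sum>b\<in>S2. real ((M-1) choose b j) * R j b * T b)"
  proof (rule sum.reindex_bij_witness[where i=up and j=dn])
    fix a assume a: "a \<in> S1"
    show "up (dn a) = a" using a by (auto simp: S1_def up_def dn_def)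
    have aB: "a \<in> B" and a1: "1 \<le> a j" and as: "sum a {1..n-1} = dl + 1" using a by (auto simp: S1_def)
    show "dn a \<in> S2" using dnB[OF aB] sum_dn[of a, OF a1] as bj[OF aB] a1 by (auto simp: S2_def dn_def)
    have "dn a \<in> S2" using dnB[OF aB] sum_dn[of a, OF a1] as bj[OF aB] a1 by (auto simp: S2_def dn_def)
    from trm[OF this] show "real ((M-1) choose dn a j) * R j (dn a) * T (dn a) = real ((M-1) choose (M - a j)) * R j a * (T a / w j)"
      unfolding \<open>up (dn a) = a\<close> by simp
  next
    fix b assume b: "b \<in> S2"
    show "dn (up b) = b" by (simp add: up_def dn_def)
    show "up b \<in> S1" using b upB sum_up by (auto simp: S2_def S1_def up_def)
  qed
  thus ?thesis using L R by simp
qed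

end


context L9 begin

lemma case_lo:
  assumes j: "1 \<le> j" "j \<le> m"
  shows "x1 g l z ^ M * Q p s g l j (xs g l z)
     = w m ^ l * (\<Sum>b\<in>{b\<in>B. sum b {1..n-1} = dl}. \<Prod>i\<in>{1..n-1}. real (e j i choose b i) * w i ^ b i)"
proof -
  have j1: "j \<in> {1..n-1}" using j m_lt by auto
  define xf where "xf = (if j < m then xs g l z (j+1) else 1)"
  have Q: "Q p s g l j (xs g l z) = xf * (\<Sum>a\<in>{a\<in>B. sumcond g l (l-1) a}. wt p s g j a * Xmon g l a (xs g l z))"
  proof (cases "j < m")
    case True thus ?thesis using Q_lo j by (simp add: xf_def)
  next
    case False hence "j = m" using j by simp
    thus ?thesis using Q_m by (simp add: xf_def)
  qed
  have wm: "w m \<noteq> 0" using w_nz m_ge1 m_lt by simp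
  have wj: "w j \<noteq> 0" using w_nz j1 by simp
  have xf: "w m ^ (l-1) * xf = w m ^ l / w j"
  proof (cases "j < m")
    case True
    hence "xf = w m / w j" using xs_lo[of "j+1"] j by (simp add: xf_def)
    moreover have "w m ^ l = w m ^ (l-1) * w m" using l1 by (cases l) auto
    ultimately show ?thesis by simp
  next
    case False hence "j = m" using j by simp
    moreover have "w m ^ l = w m ^ (l-1) * w m" using l1 by (cases l) auto
    ultimately show ?thesis using wm by (simp add: xf_def)
  qed
  have c: "l - 1 \<le> m*M" using mM by simp
  have c2: "m*M - (l-1) = dl + 1" using mM l1 by (simp add: dl_def)
  have "x1 g l z ^ M * Q p s g l j (xs g l z) = (\<Sum>a\<in>{a\<in>B. sumcond g l (l-1) a}. wt p s g j a * (w m ^ l * T (phi a) / w j))"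
    unfolding Q sum_distrib_left
  proof (intro sum.cong refl)
    fix a assume "a \<in> {a\<in>B. sumcond g l (l-1) a}"
    hence "a \<in> B" "(\<Sum>i\<in>{1..m}. a i) = (\<Sum>i\<in>{m+1..n-1}. a i) + (l-1)" by (auto simp: sumcond_eq)
    from KT[OF this] have H: "x1 g l z ^ M * Xmon g l a (xs g l z) = w m ^ (l-1) * T (phi a)" by (simp only: T_def)
    have "x1 g l z ^ M * (xf * (wt p s g j a * Xmon g l a (xs g l z))) = wt p s g j a * xf * (x1 g l z ^ M * Xmon g l a (xs g l z))"
      by (simp only: mult_ac)
    hence "x1 g l z ^ M * (xf * (wt p s g j a * Xmon g l a (xs g l z))) = wt p s g j a * ((w m ^ (l-1) * xf) * T (phi a))"
      unfolding H by (simp only: mult_ac)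
    thus "x1 g l z ^ M * (xf * (wt p s g j a * Xmon g l a (xs g l z))) = wt p s g j a * (w m ^ l * T (phi a) / w j)"
      unfolding xf by simp
  qed
  also have "\<dots> = (\<Sum>b\<in>{b\<in>B. sum b {1..n-1} = m*M - (l-1)}. wt p s g j (phi b) * (w m ^ l * T (phi (phi b)) / w j))"
    by (rule RI[OF c])
  also have "\<dots> = w m ^ l * (\<Sum>b\<in>{b\<in>B. sum b {1..n-1} = dl + 1}. real ((M-1) choose (M - b j)) * R j b * (T b / w j))"
    unfolding c2 sum_distrib_left
  proof (intro sum.cong refl)
    fix b assume "b \<in> {b\<in>B. sum b {1..n-1} = dl + 1}"
    hence b: "b \<in> B" by simp
    have "phi b j = M - b j" using j1 j by (simp add: phi_def)
    hence "wt p s g j (phi b) = real ((M-1) choose (M - b j)) * R j b"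
      unfolding wt_eq R_phi[OF b] R_def by simp
    thus "wt p s g j (phi b) * (w m ^ l * T (phi (phi b)) / w j) = w m ^ l * (real ((M-1) choose (M - b j)) * R j b * (T b / w j))"
      using phi_phi[OF b] by simp
  qed
  also have "\<dots> = w m ^ l * (\<Sum>b\<in>{b\<in>B. sum b {1..n-1} = dl}. real ((M-1) choose b j) * R j b * T b)"
    by (simp only: shift[OF j1])
  also have "\<dots> = w m ^ l * (\<Sum>b\<in>{b\<in>B. sum b {1..n-1} = dl}. \<Prod>i\<in>{1..n-1}. real (e j i choose b i) * w i ^ b i)"
    unfolding LHS_T e_prod[OF j1] R_def ..
  finally show ?thesis .
qed

lemma main1:
  assumes j: "j \<in> {1..n}"
  shows "(-1::real) powi (int (n * M) - int (l * p^s)) * w m ^ l * Itilde p s g l z j = x1 g l z ^ M * Q p s g l j (xs g l z)"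
  unfolding LHS[OF j]
proof (cases "j \<le> m")
  case True thus "w m ^ l * (\<Sum>b\<in>{b\<in>B. sum b {1..n-1} = dl}. \<Prod>i\<in>{1..n-1}. real (e j i choose b i) * w i ^ b i) = x1 g l z ^ M * Q p s g l j (xs g l z)"
    using case_lo j by simp
next
  case False thus "w m ^ l * (\<Sum>b\<in>{b\<in>B. sum b {1..n-1} = dl}. \<Prod>i\<in>{1..n-1}. real (e j i choose b i) * w i ^ b i) = x1 g l z ^ M * Q p s g l j (xs g l z)"
    using case_hi j by simp
qed

end



lemma prod_zero_pow: "finite A \<Longrightarrow> (\<Prod>i\<in>A. (0::real) ^ f i) = (if \<forall>i\<in>A. f i = 0 then 1 else 0)"
  by (auto intro: prod_zero)

context L9 begin

lemma Xmon0: "Xmon g l a (\<lambda>_. 0) = (if \<forall>i\<in>{1..n-1}-{m}. a i = 0 then 1 else 0)"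
proof -
  have "Xmon g l a (\<lambda>_. 0) = (\<Prod>i\<in>{1..m-1}. (0::real) ^ a i) * (\<Prod>i\<in>{m+1..n-1}. (0::real) ^ a i)"
    unfolding Xmon_def m_def[symmetric] n_def[symmetric] using prod_shift1[OF m_ge1, of "\<lambda>i. (0::real) ^ a i"] by simp
  also have "\<dots> = (if \<forall>i\<in>{1..m-1} \<union> {m+1..n-1}. a i = 0 then 1 else 0)"
    by (auto simp: prod_zero_pow)
  also have "{1..m-1} \<union> {m+1..n-1} = {1..n-1}-{m}" using m_ge1 m_lt by auto
  finally show ?thesis .
qed

definition "a0 c = (\<lambda>i. if i \<in> {1..n-1} then (if i = m then c else 0) else undefined)"

lemma sum0:
  assumes c: "c \<le> M"
  shows "(\<Sum>a\<in>{a\<in>B. sumcond g l c a}. W a * Xmon g l a (\<lambda>_. 0)) = W (a0 c)"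
proof -
  have mr: "m \<in> {1..n-1}" using m_ge1 m_lt by auto
  have mem: "a0 c \<in> {a\<in>B. sumcond g l c a}"
  proof -
    have "a0 c \<in> B" using c by (auto simp: a0_def B_alt PiE_def Pi_def extensional_def)
    moreover have "(\<Sum>i\<in>{1..m}. a0 c i) = c"
      unfolding sum_split_last[OF m_ge1] using mr m_lt by (subst sum.neutral) (auto simp: a0_def)
    moreover have "(\<Sum>i\<in>{m+1..n-1}. a0 c i) = 0" by (simp add: a0_def)
    ultimately show ?thesis by (simp add: sumcond_eq)
  qed
  have X: "Xmon g l a (\<lambda>_. 0) = (if a = a0 c then 1 else 0)" if a: "a \<in> {a\<in>B. sumcond g l c a}" for a
  proof (cases "\<forall>i\<in>{1..n-1}-{m}. a i = 0")
    case True
    have aB: "a \<in> B" and sc: "(\<Sum>i\<in>{1..m}. a i) = (\<Sum>i\<in>{m+1..n-1}. a i) + c" using a by (auto simp: sumcond_eq)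
    have "(\<Sum>i\<in>{1..m}. a i) = a m"
    proof -
      have "a x = 0" if x: "x \<in> {1..m-1}" for x
      proof -
        have "x \<in> {1..n-1}-{m}" using x m_lt by auto
        thus ?thesis using True by blast
      qed
      thus ?thesis unfolding sum_split_last[OF m_ge1] by (subst sum.neutral) auto
    qed
    moreover have "(\<Sum>i\<in>{m+1..n-1}. a i) = 0" using True by (intro sum.neutral) auto
    ultimately have "a m = c" using sc by simp
    hence "a = a0 c" using True aB by (auto simp: a0_def B_alt PiE_def extensional_def)
    thus ?thesis using Xmon0 True by simp
  next
    case False
    hence "a \<noteq> a0 c" by (auto simp: a0_def)
    thus ?thesis using Xmon0 False by simp
  qed
  have "(\<Sum>a\<in>{a\<in>B. sumcond g l c a}. W a * Xmon g l a (\<lambda>_. 0)) = (\<Sum>a\<in>{a\<in>B. sumcond g l c a}. if a = a0 c then W (a0 c) else 0)"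
    by (intro sum.cong refl) (simp add: X)
  also have "\<dots> = W (a0 c)" using mem finB by (simp add: sum.delta')
  finally show ?thesis .
qed

lemma prod_a0: "j \<notin> {m} \<Longrightarrow> (\<Prod>i\<in>{1..n-1}-{j}. real (M choose a0 c i)) = real (M choose c)"
proof -
  assume j: "j \<notin> {m}"
  have mr: "m \<in> {1..n-1}-{j}" using m_ge1 m_lt j by auto
  have "(\<Prod>i\<in>{1..n-1}-{j}. real (M choose a0 c i)) = real (M choose a0 c m) * (\<Prod>i\<in>{1..n-1}-{j}-{m}. real (M choose a0 c i))"
    by (rule prod.remove[OF _ mr]) simp
  also have "(\<Prod>i\<in>{1..n-1}-{j}-{m}. real (M choose a0 c i)) = 1" by (intro prod.neutral) (auto simp: a0_def)
  finally show ?thesis using mr by (simp add: a0_def)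
qed

lemma main2:
  assumes j: "j \<in> {1..n}"
  shows "Q p s g l j (\<lambda>_. 0) = real (M choose l) * cvec p s g l j"
proof -
  have cv: "cvec p s g l j = (if j < m then 0 else if j = m then real l / real M else 1)"
    using m_n n_eq m_ge1 by (auto simp: cvec_def M_def)
  have lM: "l \<le> M" "l - 1 \<le> M" using M_ge by auto
  consider "j < m" | "j = m" | "m < j" "j \<le> n - 1" | "j = n" using j by force
  thus ?thesis
  proof cases
    case 1 thus ?thesis using Q_lo[of j] j cv by simp
  next
    case 2
    have "Q p s g l j (\<lambda>_. 0) = wt p s g m (a0 (l-1))" using 2 Q_m sum0[OF lM(2)] by simp
    also have "\<dots> = real ((M-1) choose (l-1))"
    proof -
      have "(\<Prod>i\<in>{1..n-1}-{m}. real (M choose a0 (l-1) i)) = 1" by (intro prod.neutral) (auto simp: a0_def)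
      moreover have "a0 (l-1) m = l-1" using m_ge1 m_lt by (simp add: a0_def)
      ultimately show ?thesis by (simp add: wt_eq)
    qed
    also have "\<dots> = real (M choose l) * (real l / real M)"
    proof -
      have "Suc (l-1) * (M choose Suc (l-1)) = M * ((M - 1) choose (l-1))" by (rule binomial_absorption)
      hence "real l * real (M choose l) = real M * real ((M - 1) choose (l-1))" using l1
        by (metis Suc_pred' less_eq_Suc_le of_nat_mult One_nat_def)
      thus ?thesis using M1 by (simp add: field_simps)
    qed
    finally show ?thesis using cv 2 by simp
  next
    case 3
    have "Q p s g l j (\<lambda>_. 0) = wt p s g j (a0 l)" using 3 Q_hi sum0[OF lM(1)] by simp
    also have "\<dots> = real (M choose l)"
      using 3 prod_a0[of j l] by (simp add: wt_eq a0_def)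
    finally show ?thesis using cv 3 by simp
  next
    case 4
    have "Q p s g l j (\<lambda>_. 0) = wtn p s g (a0 l)" using 4 Q_n sum0[OF lM(1)] by simp
    also have "\<dots> = real (M choose l)"
    proof -
      have e: "{1..n-1}-{n} = {1..n-1}" by auto
      show ?thesis using prod_a0[of n l] m_lt unfolding e by (simp add: wtn_def M_def[symmetric] n_def[symmetric])
    qed
    moreover have "\<not> n < m" "n \<noteq> m" using m_lt by auto
    ultimately show ?thesis using cv 4 by simp
  qed
qed

end

theorem theorem9p3:
  fixes p s g l :: nat and z :: "nat \<Rightarrow> real"
  assumes "prime p" and "odd p" and "g \<ge> 1" and "p > 2*g+1"
    and "s \<ge> 1" and "1 \<le> l" and "l \<le> g"
    and "\<forall>i\<in>{1..<2*g+1}. z i \<noteq> z (2*g+1)"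
  shows "(\<forall>j\<in>{1..2*g+1}.
           (-1::real) powi (int ((2*g+1) * MM p s) - int (l * p^s))
             * (z (2*g+1 - 2*l) - z (2*g+1)) ^ l * Itilde p s g l z j
           = x1 g l z ^ MM p s * Q p s g l j (xs g l z))
       \<and> (\<forall>j\<in>{1..2*g+1}.
           Q p s g l j (\<lambda>_. 0) = real (MM p s choose l) * cvec p s g l j)"
proof -
  interpret L: L9 p s g l z using assms by unfold_locales
  have wm: "L.w L.m = z (2*g+1 - 2*l) - z (2*g+1)" by (simp add: L.w_def L.m_def L.n_eq)
  show ?thesis
    using L.main1 L.main2 unfolding wm L.n_eq L.M_def by simp
qed

end
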